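(* Fix $\delta>0$ and let $c_2$ be a constant such that $p(x,y):=p^0_{\epsilon^{-2}\delta}(x,y)\le c_2\epsilon/\sqrt\delta$ for all $\epsilon$ and all $x,y\in\{0,\dots,\epsilon^{-1}\}$. Let $c^*>0$, $a^*>0$ and $$\mathcal X_{c^*,a^*}=\Big\{\xi:\ |\xi|\le c^*\epsilon^{-1},\ \max_{x\neq0}\xi(x)\le\epsilon^{-a^*}\Big\}.$$ Then for every $\xi\in\mathcal X_{c^*,a^*}$, $\max_{x\in\{0,\dots,\epsilon^{-1}\}}w(x|\xi)\le c_2c^*/\sqrt\delta$. Moreover, let $b>0$ with $a^*<b/2$ and $b+a^*<1$, and $\ell=\lfloor\epsilon^{-b}\rfloor$. Then for every integer $n$ there is $c'_n$ such that for all $\xi\in\mathcal X_{c^*,a^*}$ $$P_\xi\big[\xi^0_{\epsilon^{-2}\delta}\in\mathcal X_{c^*,a^*}\big]\ge1-c'_n\epsilon^n,$$ and there is a constant $c$ such that for all $\xi\in\mathcal X_{c^*,a^*}$ $$\sup_{x\le\epsilon^{-1}-\ell+1}E_\xi\Big[\big|\mathcal A_\ell(x,\xi^0_{\epsilon^{-2}\delta})-\mathcal A_\ell(x,w(\cdot|\xi))\big|^4\Big]\le c\,\epsilon^{2b}.$$ (The constants $c'_n$, $c$ do not depend on $\epsilon$ or $\xi$.)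
   Context: $\epsilon>0$ with $\epsilon^{-1}\in\mathbb N$; configurations $\xi:\{0,\dots,\epsilon^{-1}\}\to\mathbb N$, $|\xi|=\sum_x\xi(x)$. $p^0_t(x,y)$ is the transition probability of a continuous time simple symmetric random walk on $\{0,\dots,\epsilon^{-1}\}$ which jumps by $\pm1$ with equal probability after exponential times of mean $1$, jumps leading outside the interval being suppressed. $(\xi^0_t)$ is the process of independent such random walks, with law $P_\xi$ and expectation $E_\xi$ when started from $\xi$. $w(x|\xi)=E_\xi[\xi^0_{\epsilon^{-2}\delta}(x)]=\sum_yp^0_{\epsilon^{-2}\delta}(x,y)\xi(y)$. $\mathcal A_\ell(x,f)=\frac1\ell\sum_{y=x}^{x+\ell-1}f(y)$. *)

theory Defs
  imports "HOL-Probability.Probability"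
begin

text \<open>Interval {0..N} with N = 1/epsilon. One attempted jump: +1 or -1 with
  probability 1/2 each; a jump leading outside {0..N} is suppressed (walk stays).\<close>
definition rw_step :: "nat \<Rightarrow> nat \<Rightarrow> nat pmf" where
  "rw_step N y = map_pmf (\<lambda>b. if b then (if y < N then y + 1 else y)
                                   else (if 0 < y then y - 1 else y)) (bernoulli_pmf (1/2))"

text \<open>Continuous-time walk at time t: jump attempts after Exp(1) times, so the number
  of attempts up to time t is Poisson(t).\<close>
definition rw_law :: "nat \<Rightarrow> real \<Rightarrow> nat \<Rightarrow> nat pmf" where
  "rw_law N t x = bind_pmf (poisson_pmf t) (\<lambda>k. ((\<lambda>q. bind_pmf q (rw_step N)) ^^ k) (return_pmf x))"

definition p0 :: "nat \<Rightarrow> real \<Rightarrow> nat \<Rightarrow> nat \<Rightarrow> real" where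
  "p0 N t x y = pmf (rw_law N t x) y"

text \<open>Configurations xi : {0..N} -> nat, represented as nat => nat (values off {0..N} ignored).\<close>
definition total :: "nat \<Rightarrow> (nat \<Rightarrow> nat) \<Rightarrow> nat" where
  "total N \<xi> = (\<Sum>x\<le>N. \<xi> x)"

definition particles :: "nat \<Rightarrow> (nat \<Rightarrow> nat) \<Rightarrow> nat list" where
  "particles N \<xi> = concat (map (\<lambda>y. replicate (\<xi> y) y) [0..<Suc N])"

fun indep_walks :: "nat \<Rightarrow> real \<Rightarrow> nat list \<Rightarrow> (nat \<Rightarrow> nat) pmf" where
  "indep_walks N t [] = return_pmf (\<lambda>_. 0)"
| "indep_walks N t (y # ys) =
     bind_pmf (rw_law N t y) (\<lambda>z. bind_pmf (indep_walks N t ys) (\<lambda>c. return_pmf (c(z := c z + 1))))"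

text \<open>Law of xi^0_t under P_xi (independent walks started from xi).\<close>
definition config_law :: "nat \<Rightarrow> real \<Rightarrow> (nat \<Rightarrow> nat) \<Rightarrow> (nat \<Rightarrow> nat) pmf" where
  "config_law N t \<xi> = indep_walks N t (particles N \<xi>)"

text \<open>w(x|xi) with time epsilon^-2 delta = N^2 delta.\<close>
definition w :: "nat \<Rightarrow> real \<Rightarrow> nat \<Rightarrow> (nat \<Rightarrow> nat) \<Rightarrow> real" where
  "w N \<delta> x \<xi> = (\<Sum>y\<le>N. p0 N (real N ^ 2 * \<delta>) x y * real (\<xi> y))"

definition Aavg :: "nat \<Rightarrow> nat \<Rightarrow> (nat \<Rightarrow> real) \<Rightarrow> real" where
  "Aavg l x f = (1 / real l) * (\<Sum>y = x..x + l - 1. f y)"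

definition Xset :: "nat \<Rightarrow> real \<Rightarrow> real \<Rightarrow> (nat \<Rightarrow> nat) set" where
  "Xset N cs as = {\<xi>. real (total N \<xi>) \<le> cs * real N \<and>
                       (\<forall>x\<in>{1..N}. real (\<xi> x) \<le> real N powr as)}"

end

theory Submission
  imports Defs
begin


lemma integral_bind_pmf_fin:
  fixes g :: "'b \<Rightarrow> real"
  assumes fin: "finite (set_pmf p)" and fin2: "\<And>x. x \<in> set_pmf p \<Longrightarrow> finite (set_pmf (f x))"
  shows "measure_pmf.expectation (bind_pmf p f) g = measure_pmf.expectation p (\<lambda>x. measure_pmf.expectation (f x) g)"
proof -
  let ?A = "\<Union>x\<in>set_pmf p. set_pmf (f x)"
  have finA: "finite ?A" using fin fin2 by auto
  have "measure_pmf.expectation (bind_pmf p f) g = (\<Sum>a\<in>?A. g a * pmf (bind_pmf p f) a)"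
    by (rule integral_measure_pmf_real) (auto simp: finA)
  also have "\<dots> = (\<Sum>a\<in>?A. g a * (\<Sum>x\<in>set_pmf p. pmf (f x) a * pmf p x))"
    by (intro sum.cong refl) (simp add: pmf_bind integral_measure_pmf_real[OF fin])
  also have "\<dots> = (\<Sum>x\<in>set_pmf p. (\<Sum>a\<in>?A. g a * pmf (f x) a) * pmf p x)"
    by (simp add: sum_distrib_left sum_distrib_right mult_ac) (rule sum.swap)
  also have "\<dots> = (\<Sum>x\<in>set_pmf p. measure_pmf.expectation (f x) g * pmf p x)"
  proof (intro sum.cong refl)
    fix x assume x: "x \<in> set_pmf p"
    have "measure_pmf.expectation (f x) g = (\<Sum>a\<in>?A. g a * pmf (f x) a)"
      by (rule integral_measure_pmf_real) (use x finA in auto)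
    then show "(\<Sum>a\<in>?A. g a * pmf (f x) a) * pmf p x = measure_pmf.expectation (f x) g * pmf p x" by simp
  qed
  also have "\<dots> = measure_pmf.expectation p (\<lambda>x. measure_pmf.expectation (f x) g)"
    by (rule integral_measure_pmf_real[symmetric]) (auto simp: fin)
  finally show ?thesis .
qed

definition iter :: "nat \<Rightarrow> nat \<Rightarrow> nat pmf \<Rightarrow> nat pmf" where
  "iter N k q = ((\<lambda>q. bind_pmf q (rw_step N)) ^^ k) q"

lemma rw_law_iter: "rw_law N t x = bind_pmf (poisson_pmf t) (\<lambda>k. iter N k (return_pmf x))"
  by (simp add: rw_law_def iter_def)

lemma set_rw_step: "y \<le> N \<Longrightarrow> set_pmf (rw_step N y) \<subseteq> {..N}"
  by (auto simp: rw_step_def)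

lemma iter_Suc_left: "iter N (Suc k) q = bind_pmf (iter N k q) (rw_step N)"
  by (simp add: iter_def)

lemma set_iter: "set_pmf q \<subseteq> {..N} \<Longrightarrow> set_pmf (iter N k q) \<subseteq> {..N}"
proof (induction k)
  case 0 then show ?case by (simp add: iter_def)
next
  case (Suc k)
  have IH: "set_pmf (iter N k q) \<subseteq> {..N}" using Suc.IH Suc.prems .
  have "set_pmf (iter N (Suc k) q) = (\<Union>y\<in>set_pmf (iter N k q). set_pmf (rw_step N y))"
    unfolding iter_Suc_left set_bind_pmf ..
  also have "\<dots> \<subseteq> {..N}"
  proof (rule UN_least)
    fix y assume "y \<in> set_pmf (iter N k q)"
    then have "y \<le> N" using IH by auto
    then show "set_pmf (rw_step N y) \<subseteq> {..N}" by (rule set_rw_step)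
  qed
  finally show ?case .
qed

lemma set_rw_law: assumes "x \<le> N" shows "set_pmf (rw_law N t x) \<subseteq> {..N}"
proof -
  have "set_pmf (rw_law N t x) = (\<Union>k\<in>set_pmf (poisson_pmf t). set_pmf (iter N k (return_pmf x)))"
    unfolding rw_law_iter set_bind_pmf ..
  also have "\<dots> \<subseteq> {..N}"
    by (rule UN_least, rule set_iter) (use assms in simp)
  finally show ?thesis .
qed

lemma iter_bind: "iter N k q = bind_pmf q (\<lambda>z. iter N k (return_pmf z))"
proof (induction k arbitrary: q)
  case 0 then show ?case by (simp add: iter_def bind_return_pmf')
next
  case (Suc k)
  have "iter N (Suc k) q = bind_pmf (bind_pmf q (\<lambda>z. iter N k (return_pmf z))) (rw_step N)"
    unfolding iter_Suc_left by (subst Suc.IH) (rule refl)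
  also have "\<dots> = bind_pmf q (\<lambda>z. bind_pmf (iter N k (return_pmf z)) (rw_step N))"
    by (rule bind_assoc_pmf)
  also have "\<dots> = bind_pmf q (\<lambda>z. iter N (Suc k) (return_pmf z))"
    unfolding iter_Suc_left ..
  finally show ?case .
qed

lemma pmf_map_bern_half: "pmf (map_pmf g (bernoulli_pmf (1/2))) z = (of_bool (g True = z) + of_bool (g False = z)) / (2::real)"
proof -
  have e: "g -` {z} = {b\<in>UNIV. g b = z}" by blast
  have "pmf (map_pmf g (bernoulli_pmf (1/2))) z = (\<Sum>b\<in>{b\<in>UNIV. g b = z}. pmf (bernoulli_pmf (1/2)) b)"
    unfolding pmf_map e by (rule measure_measure_pmf_finite) simp
  also have "\<dots> = (\<Sum>b\<in>(UNIV::bool set). if g b = z then pmf (bernoulli_pmf (1/2)) b else 0)"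
    by (rule sum.inter_filter) simp
  also have "\<dots> = (\<Sum>b\<in>(UNIV::bool set). if g b = z then 1/2 else 0)"
    by (rule sum.cong) (simp_all only: pmf_bernoulli_half)
  also have "\<dots> = (of_bool (g True = z) + of_bool (g False = z)) / (2::real)"
    by (simp add: UNIV_bool)
  finally show ?thesis .
qed

lemma pmf_rw_step: "pmf (rw_step N y) z =
   (of_bool ((if y < N then y + 1 else y) = z) + of_bool ((if 0 < y then y - 1 else y) = z)) / 2"
  unfolding rw_step_def pmf_map_bern_half by (simp only: if_True if_False)

lemma rw_step_sym: assumes "y \<le> N" "z \<le> N" shows "pmf (rw_step N y) z = pmf (rw_step N z) y"
proof (cases "y = z")
  case True then show ?thesis by simp
next
  case False
  have 1: "((if y < N then y + 1 else y) = z) = ((if 0 < z then z - 1 else z) = y)"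
    using False assms by (cases "y < N"; cases "0 < z"; simp; linarith)
  have 2: "((if 0 < y then y - 1 else y) = z) = ((if z < N then z + 1 else z) = y)"
    using False assms by (cases "z < N"; cases "0 < y"; simp; linarith)
  show ?thesis unfolding pmf_rw_step 1 2 by (simp only: add.commute)
qed



lemma pmf_bind_sum:
  assumes "finite A" "set_pmf p \<subseteq> A"
  shows "pmf (bind_pmf p f) y = (\<Sum>z\<in>A. pmf (f z) y * pmf p z)"
  unfolding pmf_bind by (rule integral_measure_pmf_real) (use assms in auto)

lemma iter_Suc_right: "iter N (Suc k) q = iter N k (bind_pmf q (rw_step N))"
  by (simp add: iter_def funpow_Suc_right del: funpow.simps)

lemma iter_sym: "x \<le> N \<Longrightarrow> y \<le> N \<Longrightarrow>
   pmf (iter N k (return_pmf x)) y = pmf (iter N k (return_pmf y)) x"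
proof (induction k arbitrary: x y)
  case 0 then show ?case by (auto simp: iter_def pmf_return split: split_indicator)
next
  case (Suc k)
  have sx: "set_pmf (iter N k (return_pmf x)) \<subseteq> {..N}"
    by (rule set_iter) (use Suc.prems in simp)
  have "pmf (iter N (Suc k) (return_pmf x)) y
        = (\<Sum>z\<in>{..N}. pmf (rw_step N z) y * pmf (iter N k (return_pmf x)) z)"
    unfolding iter_Suc_left by (rule pmf_bind_sum) (use sx in auto)
  also have "\<dots> = (\<Sum>z\<in>{..N}. pmf (iter N k (return_pmf z)) x * pmf (rw_step N y) z)"
  proof (intro sum.cong refl)
    fix z assume "z \<in> {..N}"
    then have z: "z \<le> N" by simp
    show "pmf (rw_step N z) y * pmf (iter N k (return_pmf x)) z =
          pmf (iter N k (return_pmf z)) x * pmf (rw_step N y) z"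
      using Suc.IH[OF Suc.prems(1) z] rw_step_sym[OF z Suc.prems(2)] by simp
  qed
  also have "\<dots> = pmf (bind_pmf (rw_step N y) (\<lambda>z. iter N k (return_pmf z))) x"
    by (rule pmf_bind_sum[symmetric]) (use set_rw_step[OF Suc.prems(2)] in auto)
  also have "\<dots> = pmf (iter N (Suc k) (return_pmf y)) x"
    by (simp only: iter_Suc_right bind_return_pmf iter_bind[of N k "rw_step N y"])
  finally show ?case .
qed

lemma p0_sym: "x \<le> N \<Longrightarrow> y \<le> N \<Longrightarrow> p0 N t x y = p0 N t y x"
  unfolding p0_def rw_law_iter pmf_bind
  by (intro Bochner_Integration.integral_cong refl iter_sym)

lemma p0_nonneg: "0 \<le> p0 N t x y"
  by (simp add: p0_def)

lemma indep_walks_Cons: "indep_walks N t (y # ys) =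
  bind_pmf (rw_law N t y) (\<lambda>z. map_pmf (\<lambda>c. c(z := c z + 1)) (indep_walks N t ys))"
  by (simp add: map_pmf_def)

definition okl :: "nat \<Rightarrow> nat list \<Rightarrow> bool" where "okl N ys \<longleftrightarrow> (\<forall>y\<in>set ys. y \<le> N)"

lemma fin_rw_law: "x \<le> N \<Longrightarrow> finite (set_pmf (rw_law N t x))"
  by (rule finite_subset[OF set_rw_law]) simp_all

lemma fin_W: "okl N ys \<Longrightarrow> finite (set_pmf (indep_walks N t ys))"
proof (induction ys)
  case Nil then show ?case by simp
next
  case (Cons y ys)
  have "okl N ys" "y \<le> N" using Cons.prems by (auto simp: okl_def)
  then show ?case using Cons.IH fin_rw_law[of y N t]
    by (simp only: indep_walks_Cons set_bind_pmf set_map_pmf) blast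
qed

lemma E_W_Cons:
  fixes g :: "(nat \<Rightarrow> nat) \<Rightarrow> real"
  assumes "okl N (y # ys)"
  shows "measure_pmf.expectation (indep_walks N t (y # ys)) g =
    measure_pmf.expectation (rw_law N t y)
      (\<lambda>z. measure_pmf.expectation (indep_walks N t ys) (\<lambda>c. g (c(z := c z + 1))))"
proof -
  have ok: "okl N ys" "y \<le> N" using assms by (auto simp: okl_def)
  have "measure_pmf.expectation (indep_walks N t (y # ys)) g =
    measure_pmf.expectation (rw_law N t y)
      (\<lambda>z. measure_pmf.expectation (map_pmf (\<lambda>c. c(z := c z + 1)) (indep_walks N t ys)) g)"
    unfolding indep_walks_Cons
    by (rule integral_bind_pmf_fin) (use ok in \<open>auto simp: fin_rw_law fin_W\<close>)
  then show ?thesis by simp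
qed

lemma sum_upd_nat: "finite A \<Longrightarrow> z \<in> A \<Longrightarrow> (\<Sum>u\<in>A. (c(z := c z + 1)) u) = (\<Sum>u\<in>A. c u) + (1::nat)"
proof -
  assume A: "finite A" "z \<in> A"
  have "(\<Sum>u\<in>A. (c(z := c z + 1)) u) = (\<Sum>u\<in>A. c u + (if u = z then 1 else 0))"
    by (intro sum.cong refl) simp
  also have "\<dots> = (\<Sum>u\<in>A. c u) + 1" using A by (simp add: sum.distrib)
  finally show ?thesis .
qed

lemma W_support: "okl N ys \<Longrightarrow> \<eta> \<in> set_pmf (indep_walks N t ys) \<Longrightarrow>
   (\<forall>u>N. \<eta> u = 0) \<and> (\<Sum>u\<le>N. \<eta> u) = length ys"
proof (induction ys arbitrary: \<eta>)
  case Nil then show ?case by simp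
next
  case (Cons y ys)
  have ok: "okl N ys" "y \<le> N" using Cons.prems by (auto simp: okl_def)
  from Cons.prems(2) obtain z c where z: "z \<in> set_pmf (rw_law N t y)"
    and c: "c \<in> set_pmf (indep_walks N t ys)" and e: "\<eta> = c(z := c z + 1)"
    by (auto simp: indep_walks_Cons)
  have zN: "z \<le> N" using set_rw_law[OF ok(2)] z by auto
  have IH: "(\<forall>u>N. c u = 0) \<and> (\<Sum>u\<le>N. c u) = length ys" using Cons.IH[OF ok(1) c] .
  have "\<forall>u>N. \<eta> u = 0" using IH zN e by auto
  moreover have "(\<Sum>u\<le>N. \<eta> u) = length (y # ys)"
    unfolding e using sum_upd_nat[of "{..N}" z c] zN IH by simp
  ultimately show ?case by blast
qed



lemma E_indicator_pmf: "measure_pmf.expectation p (indicator A :: _ \<Rightarrow> real) = measure_pmf.prob p A"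
  by simp

lemma E_exp_W:
  assumes "okl N ys"
  shows "measure_pmf.expectation (indep_walks N t ys) (\<lambda>\<eta>. exp (real (\<eta> x)))
         \<le> exp ((exp 1 - 1) * (\<Sum>y\<leftarrow>ys. p0 N t y x))"
  using assms
proof (induction ys)
  case Nil then show ?case by simp
next
  case (Cons y ys)
  have ok: "okl N ys" "y \<le> N" using Cons.prems by (auto simp: okl_def)
  define M where "M = measure_pmf.expectation (indep_walks N t ys) (\<lambda>\<eta>. exp (real (\<eta> x)))"
  have M0: "0 \<le> M" unfolding M_def by simp
  have IH: "M \<le> exp ((exp 1 - 1) * (\<Sum>y\<leftarrow>ys. p0 N t y x))" using Cons.IH[OF ok(1)] by (simp add: M_def)
  have fin: "finite (set_pmf (rw_law N t y))" by (rule fin_rw_law[OF ok(2)])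
  have "measure_pmf.expectation (indep_walks N t (y # ys)) (\<lambda>\<eta>. exp (real (\<eta> x)))
     = measure_pmf.expectation (rw_law N t y)
        (\<lambda>z. measure_pmf.expectation (indep_walks N t ys) (\<lambda>c. exp (real ((c(z := c z + 1)) x))))"
    by (rule E_W_Cons) (use Cons.prems in simp)
  also have "\<dots> = measure_pmf.expectation (rw_law N t y) (\<lambda>z. (1 + (exp 1 - 1) * indicator {x} z) * M)"
  proof (intro Bochner_Integration.integral_cong refl)
    fix z
    have "(\<lambda>c. exp (real ((c(z := c z + 1)) x))) = (\<lambda>c. (1 + (exp 1 - 1) * indicator {x} z) * exp (real (c x)))"
      by (rule ext) (auto simp: exp_add split: split_indicator)
    then show "measure_pmf.expectation (indep_walks N t ys) (\<lambda>c. exp (real ((c(z := c z + 1)) x)))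
       = (1 + (exp 1 - 1) * indicator {x} z) * M"
      by (simp add: M_def)
  qed
  also have "\<dots> = (1 + (exp 1 - 1) * p0 N t y x) * M"
    using fin by (simp add: integral_add integrable_measure_pmf_finite measure_pmf_single p0_def)
  also have "\<dots> \<le> exp ((exp 1 - 1) * p0 N t y x) * exp ((exp 1 - 1) * (\<Sum>y\<leftarrow>ys. p0 N t y x))"
  proof (rule mult_mono)
    show "1 + (exp 1 - 1) * p0 N t y x \<le> exp ((exp 1 - 1) * p0 N t y x)" by (rule exp_ge_add_one_self)
    show "0 \<le> exp ((exp 1 - 1) * p0 N t y x)" by simp
  qed (use IH M0 in auto)
  also have "\<dots> = exp ((exp 1 - 1) * (\<Sum>y\<leftarrow>y # ys. p0 N t y x))"
    by (simp add: exp_add[symmetric] algebra_simps)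
  finally show ?case .
qed

lemma prob_exp_bound:
  fixes X :: "'a \<Rightarrow> real"
  assumes "finite (set_pmf M)"
  shows "measure_pmf.prob M {\<eta>. a < X \<eta>} \<le> measure_pmf.expectation M (\<lambda>\<eta>. exp (X \<eta>)) / exp a"
proof -
  have "measure_pmf.prob M {\<eta>. a < X \<eta>} = measure_pmf.expectation M (indicator {\<eta>. a < X \<eta>})"
    by simp
  also have "\<dots> \<le> measure_pmf.expectation M (\<lambda>\<eta>. exp (X \<eta>) / exp a)"
  proof (rule integral_mono)
    show "integrable (measure_pmf M) (indicator {\<eta>. a < X \<eta>} :: _ \<Rightarrow> real)"
      using assms by (rule integrable_measure_pmf_finite)
    show "integrable (measure_pmf M) (\<lambda>\<eta>. exp (X \<eta>) / exp a)"
      using assms by (rule integrable_measure_pmf_finite)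
    fix \<eta>
    show "indicator {\<eta>. a < X \<eta>} \<eta> \<le> exp (X \<eta>) / exp a"
    proof (cases "a < X \<eta>")
      case True
      then have "exp a \<le> exp (X \<eta>)" by simp
      then show ?thesis using True by simp
    qed simp
  qed
  also have "\<dots> = measure_pmf.expectation M (\<lambda>\<eta>. exp (X \<eta>)) / exp a"
    by simp
  finally show ?thesis .
qed



definition qq :: "nat \<Rightarrow> real \<Rightarrow> nat set \<Rightarrow> nat \<Rightarrow> real" where
  "qq N t Wd y = measure_pmf.prob (rw_law N t y) Wd"

definition SS :: "nat set \<Rightarrow> (nat \<Rightarrow> nat) \<Rightarrow> real" where
  "SS Wd \<eta> = (\<Sum>u\<in>Wd. real (\<eta> u))"

definition DD :: "nat \<Rightarrow> real \<Rightarrow> nat set \<Rightarrow> nat list \<Rightarrow> (nat \<Rightarrow> nat) \<Rightarrow> real" where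
  "DD N t Wd ys \<eta> = SS Wd \<eta> - (\<Sum>y\<leftarrow>ys. qq N t Wd y)"

lemma qq_bounds: "0 \<le> qq N t Wd y" "qq N t Wd y \<le> 1"
  by (simp_all add: qq_def)

lemma SS_upd: "finite Wd \<Longrightarrow> SS Wd (c(z := c z + 1)) = SS Wd c + indicator Wd z"
proof -
  assume fin: "finite Wd"
  have "SS Wd (c(z := c z + 1)) = (\<Sum>u\<in>Wd. real (c u) + (if u = z then 1 else 0))"
    unfolding SS_def by (intro sum.cong refl) simp
  also have "\<dots> = SS Wd c + (\<Sum>u\<in>Wd. if u = z then 1 else 0)"
    by (simp add: sum.distrib SS_def)
  also have "(\<Sum>u\<in>Wd. if u = z then 1 else (0::real)) = indicator Wd z"
    using fin by (simp add: sum.delta' split: split_indicator)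
  finally show ?thesis .
qed

lemma DD_Cons: "finite Wd \<Longrightarrow> DD N t Wd (y # ys) (c(z := c z + 1)) = (indicator Wd z - qq N t Wd y) + DD N t Wd ys c"
  unfolding DD_def by (simp only: SS_upd) simp

lemma pow4_expand: "((a::real) + b) ^ 4 = a ^ 4 + 4 * a ^ 3 * b + 6 * a\<^sup>2 * b\<^sup>2 + 4 * a * b ^ 3 + b ^ 4"
  by (simp add: power_def numeral_eq_Suc algebra_simps)

lemma pow2_expand: "((a::real) + b) ^ 2 = a ^ 2 + 2 * a * b + b ^ 2"
  by (simp add: power2_eq_square algebra_simps)

lemma E4_shift:
  fixes f :: "'a \<Rightarrow> real"
  assumes "finite (set_pmf M)"
  shows "measure_pmf.expectation M (\<lambda>c. (a + f c) ^ 4) =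
     a ^ 4 + 4 * a ^ 3 * measure_pmf.expectation M f + 6 * a\<^sup>2 * measure_pmf.expectation M (\<lambda>c. (f c)\<^sup>2)
     + 4 * a * measure_pmf.expectation M (\<lambda>c. (f c) ^ 3) + measure_pmf.expectation M (\<lambda>c. (f c) ^ 4)"
  unfolding pow4_expand using assms
  by (simp add: integral_add integrable_measure_pmf_finite)

lemma E2_shift:
  fixes f :: "'a \<Rightarrow> real"
  assumes "finite (set_pmf M)"
  shows "measure_pmf.expectation M (\<lambda>c. (a + f c) ^ 2) =
     a ^ 2 + 2 * a * measure_pmf.expectation M f + measure_pmf.expectation M (\<lambda>c. (f c)\<^sup>2)"
  unfolding pow2_expand using assms
  by (simp add: integral_add integrable_measure_pmf_finite)

lemma E1_shift:
  fixes f :: "'a \<Rightarrow> real"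
  assumes "finite (set_pmf M)"
  shows "measure_pmf.expectation M (\<lambda>c. a + f c) = a + measure_pmf.expectation M f"
  using assms by (simp add: integral_add integrable_measure_pmf_finite)

definition XX :: "nat \<Rightarrow> real \<Rightarrow> nat set \<Rightarrow> nat \<Rightarrow> nat \<Rightarrow> real" where
  "XX N t Wd y z = indicator Wd z - qq N t Wd y"

lemma XX_abs: "\<bar>XX N t Wd y z\<bar> \<le> 1"
  using qq_bounds[of N t Wd y] by (auto simp: XX_def split: split_indicator)

lemma EX1: "y \<le> N \<Longrightarrow> measure_pmf.expectation (rw_law N t y) (XX N t Wd y) = 0"
  using fin_rw_law[of y N t] unfolding XX_def
  by (simp add: integrable_measure_pmf_finite qq_def)

lemma EX2: assumes "y \<le> N"
  shows "measure_pmf.expectation (rw_law N t y) (\<lambda>z. (XX N t Wd y z)\<^sup>2) \<le> qq N t Wd y"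
proof -
  define q where "q = qq N t Wd y"
  have e: "(\<lambda>z. (XX N t Wd y z)\<^sup>2) = (\<lambda>z. (1 - 2 * q) * indicator Wd z + q\<^sup>2)"
    by (rule ext) (auto simp: XX_def q_def power2_eq_square algebra_simps split: split_indicator)
  have "measure_pmf.expectation (rw_law N t y) (\<lambda>z. (XX N t Wd y z)\<^sup>2) = (1 - 2 * q) * q + q\<^sup>2"
    unfolding e using fin_rw_law[OF assms, of t]
    by (simp add: integral_add integrable_measure_pmf_finite qq_def q_def)
  also have "\<dots> \<le> q" using qq_bounds[of N t Wd y] by (simp add: q_def power2_eq_square algebra_simps)
  finally show ?thesis by (simp add: q_def)
qed

lemma EX4: assumes "y \<le> N"
  shows "measure_pmf.expectation (rw_law N t y) (\<lambda>z. (XX N t Wd y z) ^ 4) \<le> qq N t Wd y"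
proof -
  have fin: "finite (set_pmf (rw_law N t y))" by (rule fin_rw_law[OF assms])
  have "measure_pmf.expectation (rw_law N t y) (\<lambda>z. (XX N t Wd y z) ^ 4)
        \<le> measure_pmf.expectation (rw_law N t y) (\<lambda>z. (XX N t Wd y z)\<^sup>2)"
  proof (rule integral_mono)
    show "integrable (measure_pmf (rw_law N t y)) (\<lambda>z. (XX N t Wd y z) ^ 4)"
      using fin by (rule integrable_measure_pmf_finite)
    show "integrable (measure_pmf (rw_law N t y)) (\<lambda>z. (XX N t Wd y z)\<^sup>2)"
      using fin by (rule integrable_measure_pmf_finite)
    fix z
    have "(XX N t Wd y z)\<^sup>2 \<le> 1" using XX_abs[of N t Wd y z] abs_square_le_1 by blast
    then have "(XX N t Wd y z)\<^sup>2 * (XX N t Wd y z)\<^sup>2 \<le> 1 * (XX N t Wd y z)\<^sup>2"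
      by (intro mult_right_mono) simp_all
    then show "(XX N t Wd y z) ^ 4 \<le> (XX N t Wd y z)\<^sup>2" by (simp add: power2_eq_square power4_eq_xxxx)
  qed
  then show ?thesis using EX2[OF assms, of t Wd] by linarith
qed

lemma DD_moments:
  assumes "okl N ys" "finite Wd"
  shows "measure_pmf.expectation (indep_walks N t ys) (DD N t Wd ys) = 0
       \<and> measure_pmf.expectation (indep_walks N t ys) (\<lambda>\<eta>. (DD N t Wd ys \<eta>)\<^sup>2) \<le> (\<Sum>y\<leftarrow>ys. qq N t Wd y)
       \<and> measure_pmf.expectation (indep_walks N t ys) (\<lambda>\<eta>. (DD N t Wd ys \<eta>) ^ 4)
            \<le> 3 * (\<Sum>y\<leftarrow>ys. qq N t Wd y)\<^sup>2 + (\<Sum>y\<leftarrow>ys. qq N t Wd y)"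
  using assms(1)
proof (induction ys)
  case Nil then show ?case by (simp add: DD_def SS_def)
next
  case (Cons y ys)
  have ok: "okl N ys" "y \<le> N" using Cons.prems by (auto simp: okl_def)
  note IH = Cons.IH[OF ok(1)]
  define W where "W = indep_walks N t ys"
  define D where "D = DD N t Wd ys"
  define Q where "Q = (\<Sum>y\<leftarrow>ys. qq N t Wd y)"
  define q where "q = qq N t Wd y"
  define X where "X = XX N t Wd y"
  define m2 where "m2 = measure_pmf.expectation W (\<lambda>\<eta>. (D \<eta>)\<^sup>2)"
  define m3 where "m3 = measure_pmf.expectation W (\<lambda>\<eta>. (D \<eta>) ^ 3)"
  define m4 where "m4 = measure_pmf.expectation W (\<lambda>\<eta>. (D \<eta>) ^ 4)"
  have m1: "measure_pmf.expectation W D = 0" and m2b: "m2 \<le> Q" and m4b: "m4 \<le> 3 * Q\<^sup>2 + Q"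
    using IH by (simp_all add: W_def D_def m2_def m4_def Q_def)
  have m2nn: "0 \<le> m2" unfolding m2_def by simp
  have finW: "finite (set_pmf W)" unfolding W_def by (rule fin_W[OF ok(1)])
  have finP: "finite (set_pmf (rw_law N t y))" by (rule fin_rw_law[OF ok(2)])
  have EX1: "measure_pmf.expectation (rw_law N t y) X = 0" unfolding X_def by (rule EX1[OF ok(2)])
  have EX2: "measure_pmf.expectation (rw_law N t y) (\<lambda>z. (X z)\<^sup>2) \<le> q" unfolding X_def q_def by (rule EX2[OF ok(2)])
  have EX2nn: "0 \<le> measure_pmf.expectation (rw_law N t y) (\<lambda>z. (X z)\<^sup>2)" by simp
  have EX4: "measure_pmf.expectation (rw_law N t y) (\<lambda>z. (X z) ^ 4) \<le> q" unfolding X_def q_def by (rule EX4[OF ok(2)])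
  have upd: "\<And>z c. DD N t Wd (y # ys) (c(z := c z + 1)) = X z + D c"
    unfolding X_def D_def XX_def by (rule DD_Cons[OF assms(2)])
  have Qc: "(\<Sum>y\<leftarrow>y # ys. qq N t Wd y) = q + Q" by (simp add: q_def Q_def)
  have E: "\<And>g :: (nat \<Rightarrow> nat) \<Rightarrow> real. measure_pmf.expectation (indep_walks N t (y # ys)) g =
    measure_pmf.expectation (rw_law N t y) (\<lambda>z. measure_pmf.expectation W (\<lambda>c. g (c(z := c z + 1))))"
    unfolding W_def by (rule E_W_Cons) (use Cons.prems in simp)
  have A1: "measure_pmf.expectation (indep_walks N t (y # ys)) (DD N t Wd (y # ys)) = 0"
    unfolding E upd using E1_shift[OF finW] m1 EX1 by simp
  have "measure_pmf.expectation (indep_walks N t (y # ys)) (\<lambda>\<eta>. (DD N t Wd (y # ys) \<eta>)\<^sup>2)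
        = measure_pmf.expectation (rw_law N t y) (\<lambda>z. (X z)\<^sup>2 + m2)"
    unfolding E upd using E2_shift[OF finW] m1 by (simp add: m2_def)
  also have "\<dots> = measure_pmf.expectation (rw_law N t y) (\<lambda>z. (X z)\<^sup>2) + m2"
    using finP by (simp add: integral_add integrable_measure_pmf_finite)
  finally have A2: "measure_pmf.expectation (indep_walks N t (y # ys)) (\<lambda>\<eta>. (DD N t Wd (y # ys) \<eta>)\<^sup>2)
     \<le> (\<Sum>y\<leftarrow>y # ys. qq N t Wd y)" unfolding Qc using EX2 m2b by linarith
  have "measure_pmf.expectation (indep_walks N t (y # ys)) (\<lambda>\<eta>. (DD N t Wd (y # ys) \<eta>) ^ 4)
        = measure_pmf.expectation (rw_law N t y) (\<lambda>z. (X z) ^ 4 + 6 * m2 * (X z)\<^sup>2 + 4 * m3 * X z + m4)"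
    unfolding E upd using E4_shift[OF finW] m1
    by (simp add: m2_def m3_def m4_def D_def algebra_simps)
  also have "\<dots> = measure_pmf.expectation (rw_law N t y) (\<lambda>z. (X z) ^ 4)
       + 6 * m2 * measure_pmf.expectation (rw_law N t y) (\<lambda>z. (X z)\<^sup>2) + 4 * m3 * measure_pmf.expectation (rw_law N t y) X + m4"
    using finP by (simp add: integral_add integrable_measure_pmf_finite)
  also have "\<dots> \<le> q + 6 * Q * q + 0 + (3 * Q\<^sup>2 + Q)"
  proof -
    have "m2 * measure_pmf.expectation (rw_law N t y) (\<lambda>z. (X z)\<^sup>2) \<le> Q * q"
      by (rule mult_mono) (use m2b EX2 m2nn EX2nn in auto)
    then show ?thesis using EX4 EX1 m4b by simp
  qed
  also have "\<dots> \<le> 3 * (q + Q)\<^sup>2 + (q + Q)"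
    using qq_bounds[of N t Wd y] by (simp add: q_def power2_eq_square algebra_simps)
  finally have A4: "measure_pmf.expectation (indep_walks N t (y # ys)) (\<lambda>\<eta>. (DD N t Wd (y # ys) \<eta>) ^ 4)
      \<le> 3 * (\<Sum>y\<leftarrow>y # ys. qq N t Wd y)\<^sup>2 + (\<Sum>y\<leftarrow>y # ys. qq N t Wd y)" unfolding Qc .
  show ?case using A1 A2 A4 by blast
qed



lemma particles_Suc: "particles (Suc N) \<xi> = particles N \<xi> @ replicate (\<xi> (Suc N)) (Suc N)"
  by (simp add: particles_def)

lemma sum_list_particles: "(\<Sum>y\<leftarrow>particles N \<xi>. f y) = (\<Sum>y\<le>N. real (\<xi> y) * (f y :: real))"
proof (induction N)
  case 0 then show ?case by (simp add: particles_def sum_list_replicate)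
next
  case (Suc N)
  then show ?case by (simp add: particles_Suc sum_list_replicate)
qed

lemma length_particles: "length (particles N \<xi>) = total N \<xi>"
proof (induction N)
  case 0 then show ?case by (simp add: particles_def total_def)
next
  case (Suc N)
  then show ?case by (simp add: particles_Suc total_def)
qed

lemma okl_particles: "okl N (particles N \<xi>)"
  by (auto simp: okl_def particles_def)

lemma exp_ge_pow_fact:
  fixes v :: real
  assumes "0 \<le> v" shows "v ^ k / fact k \<le> exp v"
proof -
  have "v ^ k / fact k \<le> (\<Sum>n\<le>k. v ^ n / fact n)"
    by (rule member_le_sum[where f="\<lambda>n. v ^ n / fact n"]) (use assms in auto)
  also have "\<dots> \<le> exp v"
    using assms summable_exp_generic[of v]
    by (auto simp: exp_def divide_inverse ac_simps intro!: sum_le_suminf)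
  finally show ?thesis .
qed

lemma poly_exp_decay:
  fixes as :: real assumes as: "as > 0"
  shows "\<exists>C. \<forall>N::nat. N \<ge> 1 \<longrightarrow> real N / exp (real N powr as) \<le> C / real N ^ m"
proof -
  define k where "k = nat \<lceil>real (m + 1) / as\<rceil>"
  have k: "real (m + 1) \<le> as * real k"
  proof -
    have "real (m + 1) / as \<le> real k" unfolding k_def by linarith
    then show ?thesis using as by (simp add: field_simps)
  qed
  show ?thesis
  proof (intro exI allI impI)
    fix N :: nat assume N1: "N \<ge> 1"
    have Npos: "0 < real N" using N1 by simp
    have "real N powr real (m + 1) \<le> real N powr (as * real k)"
      by (rule powr_mono) (use k N1 in auto)
    also have "real N powr (as * real k) = (real N powr as) ^ k"
      using Npos by (simp add: powr_powr[symmetric] powr_realpow)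
    finally have "real N ^ (m + 1) \<le> (real N powr as) ^ k"
      using powr_realpow[OF Npos, of "m + 1"] by simp
    then have "real N ^ (m + 1) / fact k \<le> (real N powr as) ^ k / fact k"
      by (rule divide_right_mono) simp
    then have "real N ^ (m + 1) / fact k \<le> exp (real N powr as)"
      using exp_ge_pow_fact[of "real N powr as" k] by (meson order_trans powr_ge_zero)
    then have e: "real N ^ (m + 1) \<le> fact k * exp (real N powr as)"
      by (simp add: field_simps)
    have "real N / exp (real N powr as) = real N * real N ^ m / (real N ^ m * exp (real N powr as))"
      using Npos by simp
    also have "\<dots> \<le> fact k * exp (real N powr as) / (real N ^ m * exp (real N powr as))"
      by (rule divide_right_mono) (use e Npos in \<open>simp_all add: algebra_simps\<close>)
    also have "\<dots> = fact k / real N ^ m" using Npos by simp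
    finally show "real N / exp (real N powr as) \<le> fact k / real N ^ m" .
  qed
qed

lemma powi_neg_ge1: "1 \<le> (x::real) \<Longrightarrow> n < 0 \<Longrightarrow> 1 \<le> (1 / x) powi n"
proof -
  assume x: "1 \<le> x" and n: "n < 0"
  obtain k where k: "n = - int k" using n by (metis minus_minus nonneg_int_cases neg_0_less_iff_less less_imp_le)
  have "(1 / x) powi n = inverse ((1 / x) powi (int k))" unfolding k by (rule power_int_minus)
  also have "\<dots> = x ^ k" by (simp add: power_one_over)
  finally have "(1 / x) powi n = x ^ k" .
  then show ?thesis using x by (simp add: one_le_power)
qed



lemma prob_X:
  assumes N1: "1 \<le> N" and \<xi>: "real (total N \<xi>) \<le> cs * real N"
    and SB: "\<And>x. x \<le> N \<Longrightarrow> (\<Sum>y\<leftarrow>particles N \<xi>. p0 N t y x) \<le> K"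
  shows "measure_pmf.prob (config_law N t \<xi>) (Xset N cs as)
          \<ge> 1 - real N * (exp ((exp 1 - 1) * K) / exp (real N powr as))"
proof -
  define M where "M = config_law N t \<xi>"
  define ys where "ys = particles N \<xi>"
  define E where "E = exp ((exp 1 - 1) * K) / exp (real N powr as)"
  have ok: "okl N ys" unfolding ys_def by (rule okl_particles)
  have M: "M = indep_walks N t ys" by (simp add: M_def ys_def config_law_def)
  have fin: "finite (set_pmf M)" unfolding M by (rule fin_W[OF ok])
  have sub: "(UNIV - Xset N cs as) \<inter> set_pmf M \<subseteq> (\<Union>x\<in>{1..N}. {\<eta>. real N powr as < real (\<eta> x)})"
  proof
    fix \<eta> assume h: "\<eta> \<in> (UNIV - Xset N cs as) \<inter> set_pmf M"
    then have "\<eta> \<in> set_pmf (indep_walks N t ys)" by (simp add: M)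
    then have "(\<Sum>u\<le>N. \<eta> u) = length ys" using W_support[OF ok] by blast
    then have "total N \<eta> = total N \<xi>" by (simp add: total_def ys_def length_particles)
    then have "real (total N \<eta>) \<le> cs * real N" using \<xi> by simp
    with h obtain x where "x \<in> {1..N}" "\<not> real (\<eta> x) \<le> real N powr as"
      by (auto simp: Xset_def)
    then show "\<eta> \<in> (\<Union>x\<in>{1..N}. {\<eta>. real N powr as < real (\<eta> x)})" using not_le by blast
  qed
  have each: "measure_pmf.prob M {\<eta>. real N powr as < real (\<eta> x)} \<le> E" if x: "x \<in> {1..N}" for x
  proof -
    have "measure_pmf.prob M {\<eta>. real N powr as < real (\<eta> x)}
          \<le> measure_pmf.expectation M (\<lambda>\<eta>. exp (real (\<eta> x))) / exp (real N powr as)"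
      by (rule prob_exp_bound[OF fin])
    also have "\<dots> \<le> exp ((exp 1 - 1) * (\<Sum>y\<leftarrow>ys. p0 N t y x)) / exp (real N powr as)"
      unfolding M by (rule divide_right_mono[OF E_exp_W[OF ok]]) simp
    also have "\<dots> \<le> E"
    proof -
      have "(exp 1 - 1) * (\<Sum>y\<leftarrow>ys. p0 N t y x) \<le> (exp 1 - 1) * K"
        by (rule mult_left_mono) (use SB[of x] x in \<open>simp_all add: ys_def\<close>)
      then show ?thesis unfolding E_def by (intro divide_right_mono) simp_all
    qed
    finally show ?thesis .
  qed
  have "measure_pmf.prob M (UNIV - Xset N cs as) = measure_pmf.prob M ((UNIV - Xset N cs as) \<inter> set_pmf M)"
    by (rule measure_Int_set_pmf[symmetric])
  also have "\<dots> \<le> measure_pmf.prob M (\<Union>x\<in>{1..N}. {\<eta>. real N powr as < real (\<eta> x)})"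
    by (rule measure_pmf.finite_measure_mono[OF sub]) simp
  also have "\<dots> \<le> (\<Sum>x\<in>{1..N}. measure_pmf.prob M {\<eta>. real N powr as < real (\<eta> x)})"
    by (rule measure_pmf.finite_measure_subadditive_finite) auto
  also have "\<dots> \<le> (\<Sum>x\<in>{1..N}. E)"
    by (rule sum_mono) (rule each)
  also have "\<dots> = real N * E" by simp
  finally have c: "measure_pmf.prob M (UNIV - Xset N cs as) \<le> real N * E" .
  have "measure_pmf.prob M (UNIV - Xset N cs as) = 1 - measure_pmf.prob M (Xset N cs as)"
    using measure_pmf.prob_compl[of "Xset N cs as" M] by simp
  then show ?thesis using c unfolding M_def E_def by linarith
qed

lemma abs4: "\<bar>a::real\<bar> ^ 4 = a ^ 4"
  by (simp add: power_even_abs)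

lemma fourth:
  fixes \<delta> K :: real and l x0 N :: nat
  assumes N1: "1 \<le> N" and l1: "1 \<le> l" and xl: "x0 + l \<le> N + 1" and K0: "0 \<le> K"
    and wb: "\<And>u. u \<le> N \<Longrightarrow> w N \<delta> u \<xi> \<le> K"
  shows "measure_pmf.expectation (config_law N (real N ^ 2 * \<delta>) \<xi>)
                (\<lambda>\<eta>. \<bar>Aavg l x0 (\<lambda>y. real (\<eta> y)) - Aavg l x0 (\<lambda>y. w N \<delta> y \<xi>)\<bar> ^ 4)
          \<le> (3 * K\<^sup>2 + K) / (real l)\<^sup>2"
proof -
  define t where "t = real N ^ 2 * \<delta>"
  define Wd where "Wd = {x0..x0 + l - 1}"
  define ys where "ys = particles N \<xi>"
  define Q where "Q = (\<Sum>y\<leftarrow>ys. qq N t Wd y)"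
  have finWd: "finite Wd" by (simp add: Wd_def)
  have cardWd: "card Wd = l" using l1 by (simp add: Wd_def)
  have WdN: "\<And>u. u \<in> Wd \<Longrightarrow> u \<le> N" using xl l1 by (auto simp: Wd_def)
  have ok: "okl N ys" unfolding ys_def by (rule okl_particles)
  have lpos: "0 < real l" using l1 by simp
  have Aeta: "\<And>\<eta>. Aavg l x0 (\<lambda>y. real (\<eta> y)) = SS Wd \<eta> / real l"
    by (simp add: Aavg_def SS_def Wd_def)
  have sumw: "(\<Sum>u\<in>Wd. w N \<delta> u \<xi>) = Q"
  proof -
    have "(\<Sum>u\<in>Wd. w N \<delta> u \<xi>) = (\<Sum>u\<in>Wd. \<Sum>y\<le>N. p0 N t u y * real (\<xi> y))"
      by (simp add: w_def t_def)
    also have "\<dots> = (\<Sum>y\<le>N. \<Sum>u\<in>Wd. p0 N t u y * real (\<xi> y))"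
      by (rule sum.swap)
    also have "\<dots> = (\<Sum>y\<le>N. real (\<xi> y) * qq N t Wd y)"
    proof (intro sum.cong refl)
      fix y assume "y \<in> {..N}"
      then have y: "y \<le> N" by simp
      have "(\<Sum>u\<in>Wd. p0 N t u y * real (\<xi> y)) = real (\<xi> y) * (\<Sum>u\<in>Wd. p0 N t y u)"
        by (simp add: sum_distrib_left mult.commute p0_sym[OF WdN y])
      also have "(\<Sum>u\<in>Wd. p0 N t y u) = qq N t Wd y"
        by (simp add: qq_def p0_def measure_measure_pmf_finite[OF finWd])
      finally show "(\<Sum>u\<in>Wd. p0 N t u y * real (\<xi> y)) = real (\<xi> y) * qq N t Wd y" .
    qed
    also have "\<dots> = Q" unfolding Q_def ys_def by (rule sum_list_particles[symmetric])
    finally show ?thesis .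
  qed
  have Aw: "Aavg l x0 (\<lambda>y. w N \<delta> y \<xi>) = Q / real l"
    using sumw by (simp add: Aavg_def Wd_def)
  have Q0: "0 \<le> Q" unfolding Q_def by (rule sum_list_nonneg) (auto simp: qq_bounds)
  have QK: "Q \<le> real l * K"
  proof -
    have "Q = (\<Sum>u\<in>Wd. w N \<delta> u \<xi>)" using sumw by simp
    also have "\<dots> \<le> (\<Sum>u\<in>Wd. K)" by (rule sum_mono) (rule wb[OF WdN])
    also have "\<dots> = real l * K" using cardWd by simp
    finally show ?thesis .
  qed
  have integrand: "(\<lambda>\<eta>. \<bar>Aavg l x0 (\<lambda>y. real (\<eta> y)) - Aavg l x0 (\<lambda>y. w N \<delta> y \<xi>)\<bar> ^ 4)
      = (\<lambda>\<eta>. (DD N t Wd ys \<eta>) ^ 4 / real l ^ 4)"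
  proof (rule ext)
    fix \<eta>
    have "Aavg l x0 (\<lambda>y. real (\<eta> y)) - Aavg l x0 (\<lambda>y. w N \<delta> y \<xi>) = DD N t Wd ys \<eta> / real l"
      unfolding Aeta Aw DD_def Q_def by (simp add: diff_divide_distrib)
    then show "\<bar>Aavg l x0 (\<lambda>y. real (\<eta> y)) - Aavg l x0 (\<lambda>y. w N \<delta> y \<xi>)\<bar> ^ 4
        = (DD N t Wd ys \<eta>) ^ 4 / real l ^ 4"
      by (simp add: abs4 power_divide)
  qed
  have "measure_pmf.expectation (config_law N (real N ^ 2 * \<delta>) \<xi>)
                (\<lambda>\<eta>. \<bar>Aavg l x0 (\<lambda>y. real (\<eta> y)) - Aavg l x0 (\<lambda>y. w N \<delta> y \<xi>)\<bar> ^ 4)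
        = measure_pmf.expectation (indep_walks N t ys) (\<lambda>\<eta>. (DD N t Wd ys \<eta>) ^ 4) / real l ^ 4"
    unfolding integrand by (simp add: config_law_def t_def ys_def)
  also have "\<dots> \<le> (3 * Q\<^sup>2 + Q) / real l ^ 4"
    by (rule divide_right_mono) (use DD_moments[OF ok finWd, of t] in \<open>simp_all add: Q_def\<close>)
  also have "\<dots> \<le> (3 * (real l * K)\<^sup>2 + real l * K) / real l ^ 4"
  proof (rule divide_right_mono)
    have "Q\<^sup>2 \<le> (real l * K)\<^sup>2" by (rule power_mono[OF QK Q0])
    then show "3 * Q\<^sup>2 + Q \<le> 3 * (real l * K)\<^sup>2 + real l * K" using QK by linarith
  qed simp
  also have "\<dots> = (3 * K\<^sup>2 + K / real l) / (real l)\<^sup>2"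
    using lpos by (simp add: field_simps power2_eq_square power4_eq_xxxx)
  also have "\<dots> \<le> (3 * K\<^sup>2 + K) / (real l)\<^sup>2"
  proof (rule divide_right_mono)
    have "K / real l \<le> K / 1" by (rule divide_left_mono) (use K0 l1 in auto)
    then have "K / real l \<le> K" by simp
    then show "3 * K\<^sup>2 + K / real l \<le> 3 * K\<^sup>2 + K" by simp
  qed simp
  finally show ?thesis .
qed



lemma floor_half:
  fixes v :: real assumes "1 \<le> v" shows "v / 2 \<le> real (nat \<lfloor>v\<rfloor>)"
proof -
  have "v - 1 < real_of_int \<lfloor>v\<rfloor>" by linarith
  moreover have "1 \<le> \<lfloor>v\<rfloor>" using assms by simp
  ultimately show ?thesis by linarith
qed

theorem mainTheorem8:
  fixes \<delta> c2 cs as b :: real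
  assumes "\<delta> > 0" and "cs > 0" and "as > 0"
    and hp: "\<forall>N::nat. N \<ge> 1 \<longrightarrow> (\<forall>x\<le>N. \<forall>y\<le>N.
               p0 N (real N ^ 2 * \<delta>) x y \<le> c2 * (1 / real N) / sqrt \<delta>)"
  shows "(\<forall>N::nat. N \<ge> 1 \<longrightarrow> (\<forall>\<xi>\<in>Xset N cs as. \<forall>x\<le>N. w N \<delta> x \<xi> \<le> c2 * cs / sqrt \<delta>))
    \<and> ((b > 0 \<and> as < b / 2 \<and> b + as < 1) \<longrightarrow>
        ((\<forall>n::int. \<exists>c'. \<forall>N::nat. N \<ge> 1 \<longrightarrow> (\<forall>\<xi>\<in>Xset N cs as.
            measure_pmf.prob (config_law N (real N ^ 2 * \<delta>) \<xi>) (Xset N cs as)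
              \<ge> 1 - c' * (1 / real N) powi n))
        \<and> (\<exists>c. \<forall>N::nat. N \<ge> 1 \<longrightarrow> (\<forall>\<xi>\<in>Xset N cs as.
            \<forall>x::nat. x + nat \<lfloor>real N powr b\<rfloor> \<le> N + 1 \<longrightarrow>
              measure_pmf.expectation (config_law N (real N ^ 2 * \<delta>) \<xi>)
                (\<lambda>\<eta>. \<bar>Aavg (nat \<lfloor>real N powr b\<rfloor>) x (\<lambda>y. real (\<eta> y))
                      - Aavg (nat \<lfloor>real N powr b\<rfloor>) x (\<lambda>y. w N \<delta> y \<xi>)\<bar> ^ 4)
              \<le> c * (1 / real N) powr (2 * b)))))"
proof -
  have sd: "0 < sqrt \<delta>" using assms(1) by simp
  define K where "K = c2 * cs / sqrt \<delta>"
  have c2nn: "0 \<le> c2"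
  proof -
    have "p0 1 (real 1 ^ 2 * \<delta>) 0 0 \<le> c2 * (1 / real (1::nat)) / sqrt \<delta>"
      using hp by blast
    then have "0 \<le> c2 / sqrt \<delta>" using p0_nonneg[of 1 "real 1 ^ 2 * \<delta>" 0 0] by simp
    then show ?thesis using sd by (simp add: zero_le_divide_iff)
  qed
  have K0: "0 \<le> K" unfolding K_def using c2nn assms(2) sd by simp
  have Bnd: "\<And>N x y. 1 \<le> N \<Longrightarrow> x \<le> N \<Longrightarrow> y \<le> N \<Longrightarrow> p0 N (real N ^ 2 * \<delta>) x y \<le> c2 * (1 / real N) / sqrt \<delta>"
    using hp by blast
  have BK: "\<And>N. 1 \<le> N \<Longrightarrow> c2 * (1 / real N) / sqrt \<delta> * (cs * real N) = K"
    unfolding K_def by (simp add: field_simps)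
  have Bnn: "\<And>N. 0 \<le> c2 * (1 / real N) / sqrt \<delta>" using c2nn sd by simp
  have sumB: "(\<Sum>y\<le>N. real (\<xi> y) * f y) \<le> K"
    if N1: "1 \<le> N" and \<xi>: "\<xi> \<in> Xset N cs as" and fb: "\<And>y. y \<le> N \<Longrightarrow> f y \<le> c2 * (1 / real N) / sqrt \<delta>"
    for N \<xi> f
  proof -
    have "(\<Sum>y\<le>N. real (\<xi> y) * f y) \<le> (\<Sum>y\<le>N. real (\<xi> y) * (c2 * (1 / real N) / sqrt \<delta>))"
      by (rule sum_mono, rule mult_left_mono[OF fb]) auto
    also have "\<dots> = c2 * (1 / real N) / sqrt \<delta> * real (total N \<xi>)"
      unfolding total_def of_nat_sum sum_distrib_left by (intro sum.cong refl) (rule mult.commute)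
    also have "\<dots> \<le> c2 * (1 / real N) / sqrt \<delta> * (cs * real N)"
      by (rule mult_left_mono) (use \<xi> Bnn in \<open>auto simp: Xset_def\<close>)
    also have "\<dots> = K" using BK N1 by simp
    finally show ?thesis .
  qed
  have P1: "w N \<delta> x \<xi> \<le> K" if N1: "1 \<le> N" and \<xi>: "\<xi> \<in> Xset N cs as" and x: "x \<le> N" for N \<xi> x
  proof -
    have "w N \<delta> x \<xi> = (\<Sum>y\<le>N. real (\<xi> y) * p0 N (real N ^ 2 * \<delta>) x y)"
      by (simp add: w_def mult.commute)
    also have "\<dots> \<le> K" by (rule sumB[OF N1 \<xi>]) (rule Bnd[OF N1 x])
    finally show ?thesis .
  qed
  show ?thesis
  proof (intro conjI impI)
    show "\<forall>N::nat. N \<ge> 1 \<longrightarrow> (\<forall>\<xi>\<in>Xset N cs as. \<forall>x\<le>N. w N \<delta> x \<xi> \<le> c2 * cs / sqrt \<delta>)"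
      using P1 unfolding K_def by blast
  next
    assume bb: "b > 0 \<and> as < b / 2 \<and> b + as < 1"
    show "\<forall>n::int. \<exists>c'. \<forall>N::nat. N \<ge> 1 \<longrightarrow> (\<forall>\<xi>\<in>Xset N cs as.
            measure_pmf.prob (config_law N (real N ^ 2 * \<delta>) \<xi>) (Xset N cs as)
              \<ge> 1 - c' * (1 / real N) powi n)"
    proof
      fix n :: int
      obtain C where C: "\<And>N::nat. N \<ge> 1 \<Longrightarrow> real N / exp (real N powr as) \<le> C / real N ^ nat n"
        using poly_exp_decay[OF assms(3), of "nat n"] by blast
      have C0: "0 \<le> C"
      proof -
        have "real 1 / exp (real 1 powr as) \<le> C / real 1 ^ nat n" by (rule C) simp
        then have h: "1 / exp (1::real) \<le> C" by simp
        have "0 \<le> 1 / exp (1::real)" by simp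
        then show ?thesis using h by linarith
      qed
      show "\<exists>c'. \<forall>N::nat. N \<ge> 1 \<longrightarrow> (\<forall>\<xi>\<in>Xset N cs as.
            measure_pmf.prob (config_law N (real N ^ 2 * \<delta>) \<xi>) (Xset N cs as)
              \<ge> 1 - c' * (1 / real N) powi n)"
      proof (intro exI allI impI ballI)
        fix N :: nat and \<xi> assume N1: "N \<ge> 1" and \<xi>: "\<xi> \<in> Xset N cs as"
        define A where "A = exp ((exp 1 - 1) * K)"
        have A0: "0 \<le> A" by (simp add: A_def)
        have "measure_pmf.prob (config_law N (real N ^ 2 * \<delta>) \<xi>) (Xset N cs as)
              \<ge> 1 - real N * (A / exp (real N powr as))"
          unfolding A_def
        proof (rule prob_X[OF N1])
          show "real (total N \<xi>) \<le> cs * real N" using \<xi> by (simp add: Xset_def)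
          fix x assume x: "x \<le> N"
          have "(\<Sum>y\<leftarrow>particles N \<xi>. p0 N (real N ^ 2 * \<delta>) y x)
                = (\<Sum>y\<le>N. real (\<xi> y) * p0 N (real N ^ 2 * \<delta>) y x)"
            by (rule sum_list_particles)
          also have "\<dots> \<le> K" by (rule sumB[OF N1 \<xi>]) (rule Bnd[OF N1 _ x])
          finally show "(\<Sum>y\<leftarrow>particles N \<xi>. p0 N (real N ^ 2 * \<delta>) y x) \<le> K" .
        qed
        moreover have "real N * (A / exp (real N powr as)) \<le> A * C * (1 / real N) powi n"
        proof -
          have "real N * (A / exp (real N powr as)) = A * (real N / exp (real N powr as))" by simp
          also have "\<dots> \<le> A * (C / real N ^ nat n)" by (rule mult_left_mono[OF C[OF N1] A0])
          also have "C / real N ^ nat n \<le> C * (1 / real N) powi n"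
          proof (cases "n < 0")
            case True
            have "1 \<le> (1 / real N) powi n" by (rule powi_neg_ge1) (use N1 True in simp_all)
            then have "C * 1 \<le> C * (1 / real N) powi n" by (rule mult_left_mono[OF _ C0])
            then show ?thesis using True by simp
          next
            case False
            then have "n = int (nat n)" by simp
            then have "(1 / real N) powi n = (1 / real N) ^ nat n"
              by (metis power_int_of_nat)
            then show ?thesis by (simp add: power_one_over)
          qed
          then have "A * (C / real N ^ nat n) \<le> A * (C * (1 / real N) powi n)"
            by (rule mult_left_mono[OF _ A0])
          finally show ?thesis by (simp add: mult.assoc)
        qed
        ultimately show "measure_pmf.prob (config_law N (real N ^ 2 * \<delta>) \<xi>) (Xset N cs as)
              \<ge> 1 - A * C * (1 / real N) powi n" by linarith
      qed
    qed
  next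
    assume bb: "b > 0 \<and> as < b / 2 \<and> b + as < 1"
    show "\<exists>c. \<forall>N::nat. N \<ge> 1 \<longrightarrow> (\<forall>\<xi>\<in>Xset N cs as.
            \<forall>x::nat. x + nat \<lfloor>real N powr b\<rfloor> \<le> N + 1 \<longrightarrow>
              measure_pmf.expectation (config_law N (real N ^ 2 * \<delta>) \<xi>)
                (\<lambda>\<eta>. \<bar>Aavg (nat \<lfloor>real N powr b\<rfloor>) x (\<lambda>y. real (\<eta> y))
                      - Aavg (nat \<lfloor>real N powr b\<rfloor>) x (\<lambda>y. w N \<delta> y \<xi>)\<bar> ^ 4)
              \<le> c * (1 / real N) powr (2 * b))"
    proof (intro exI allI impI ballI)
      fix N :: nat and \<xi> x assume N1: "N \<ge> 1" and \<xi>: "\<xi> \<in> Xset N cs as"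
        and xl: "x + nat \<lfloor>real N powr b\<rfloor> \<le> N + 1"
      define l where "l = nat \<lfloor>real N powr b\<rfloor>"
      define v where "v = real N powr b"
      have v1: "1 \<le> v" unfolding v_def using N1 bb by (simp add: ge_one_powr_ge_zero)
      have lv: "v / 2 \<le> real l" unfolding l_def v_def[symmetric] by (rule floor_half[OF v1])
      have fl: "1 \<le> \<lfloor>v\<rfloor>" using v1 by simp
      have l1: "1 \<le> l" unfolding l_def v_def[symmetric] using fl by (simp add: le_nat_iff)
      have "measure_pmf.expectation (config_law N (real N ^ 2 * \<delta>) \<xi>)
                (\<lambda>\<eta>. \<bar>Aavg l x (\<lambda>y. real (\<eta> y)) - Aavg l x (\<lambda>y. w N \<delta> y \<xi>)\<bar> ^ 4)
            \<le> (3 * K\<^sup>2 + K) / (real l)\<^sup>2"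
        by (rule fourth[OF N1 l1 _ K0]) (use xl P1[OF N1 \<xi>] in \<open>simp_all add: l_def\<close>)
      also have "\<dots> \<le> (3 * K\<^sup>2 + K) / (v / 2)\<^sup>2"
      proof (rule divide_left_mono)
        show "(v / 2)\<^sup>2 \<le> (real l)\<^sup>2" by (rule power_mono[OF lv]) (use v1 in simp)
        show "0 \<le> 3 * K\<^sup>2 + K" using K0 by simp
        show "0 < (real l)\<^sup>2 * (v / 2)\<^sup>2" using l1 v1 by simp
      qed
      also have "\<dots> = (4 * (3 * K\<^sup>2 + K)) * (1 / real N) powr (2 * b)"
      proof -
        have "(1 / real N) powr (2 * b) = 1 / v\<^sup>2"
          using N1 by (simp add: v_def powr_divide powr_mult_base powr_powr[symmetric] powr_realpow[symmetric]
               powr_add[symmetric] power2_eq_square)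
        moreover have "(3 * K\<^sup>2 + K) / (v / 2)\<^sup>2 = (4 * (3 * K\<^sup>2 + K)) * (1 / v\<^sup>2)"
          using v1 by (simp add: field_simps power2_eq_square)
        ultimately show ?thesis by simp
      qed
      finally show "measure_pmf.expectation (config_law N (real N ^ 2 * \<delta>) \<xi>)
                (\<lambda>\<eta>. \<bar>Aavg (nat \<lfloor>real N powr b\<rfloor>) x (\<lambda>y. real (\<eta> y))
                      - Aavg (nat \<lfloor>real N powr b\<rfloor>) x (\<lambda>y. w N \<delta> y \<xi>)\<bar> ^ 4)
              \<le> (4 * (3 * K\<^sup>2 + K)) * (1 / real N) powr (2 * b)" unfolding l_def .
    qed
  qed
qed


end
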